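(* Let $k$ be an algebraically closed field of characteristic $p>0$ and $n\ge1$. Let $\mathbb{E}_{\ge0}(n,k) = \coprod_{r\ge0}\mathrm{Hom}_{\mathrm{gr}}((\mathbb{Z}/p\mathbb{Z})^r,\mathrm{GL}(n,k))$ and let $\pi : \mathbb{E}_{\ge0}(n,k)\to\mathrm{Mat}(n,k[T])^E$ be defined as follows: the unique element $\rho_0$ with $r=0$ is sent to $I_n$; for $r\ge1$, an element $\rho\in\mathrm{Hom}_{\mathrm{gr}}((\mathbb{Z}/p\mathbb{Z})^r,\mathrm{GL}(n,k))$, written uniquely as $\rho = \rho_{N_1,\ldots,N_r}$ with $(N_1,\ldots,N_r)\in\mathcal{N}_r(n,k)$, is sent to $\prod_{i=1}^r \mathrm{Exp}(T^{p^{i-1}}N_i)$. Then $\pi$ is surjective.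
   Context: A matrix $A(T)\in\mathrm{Mat}(n,k[T])$ is an exponential matrix if $A(T)A(T') = A(T+T')$ in $\mathrm{Mat}(n,k[T,T'])$ and $A(0)=I_n$; $\mathrm{Mat}(n,k[T])^E$ is the set of exponential matrices. $\mathcal{N}_r(n,k)$ is the set of $(N_1,\ldots,N_r)\in\mathrm{Mat}(n,k)^r$ with $N_i^p=O_n$ and $N_iN_j=N_jN_i$ for all $i,j$, and $\rho_{N_1,\ldots,N_r}(a_1,\ldots,a_r) = \prod_{i=1}^r(I_n+N_i)^{a_i}$; every group homomorphism $(\mathbb{Z}/p\mathbb{Z})^r\to\mathrm{GL}(n,k)$ is of this form for a unique tuple. For a matrix $M$ over a commutative $k$-algebra with $M^p=O_n$, $\mathrm{Exp}(M) := \sum_{i=0}^{p-1}\frac{1}{i!}M^i$. *)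

theory Defs
  imports "HOL-Analysis.Analysis" "HOL-Computational_Algebra.Polynomial"
begin

text \<open>n x n matrices are rendered as 'b^'n^'n with 'n a finite index type (n = CARD('n) \<ge> 1).
  Matrix product is (**), identity is mat 1.\<close>

definition mpow :: "'b::semiring_1^'n^'n \<Rightarrow> nat \<Rightarrow> 'b^'n^'n" where
  "mpow M i = (((**) M) ^^ i) (mat 1)"

text \<open>Polynomial ring k[T,T'] is rendered as ('a poly) poly: inner variable T, outer variable T'.\<close>

definition in_T :: "'a::comm_ring_1 poly \<Rightarrow> 'a poly poly" where
  "in_T f = [:f:]"                                   \<comment> \<open>f(T)\<close>

definition in_T' :: "'a::comm_ring_1 poly \<Rightarrow> 'a poly poly" where
  "in_T' f = map_poly (\<lambda>c. [:c:]) f"                 \<comment> \<open>f(T')\<close>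

definition in_TT' :: "'a::comm_ring_1 poly \<Rightarrow> 'a poly poly" where
  "in_TT' f = poly (map_poly (\<lambda>c. [:[:c:]:]) f) ([:[:0, 1:]:] + [:0, 1:])"  \<comment> \<open>f(T+T')\<close>

definition exp_matrix :: "'a::comm_ring_1 poly^'n^'n \<Rightarrow> bool" where
  "exp_matrix A \<longleftrightarrow>
     (\<chi> i j. in_T (A $ i $ j)) ** (\<chi> i j. in_T' (A $ i $ j)) = (\<chi> i j. in_TT' (A $ i $ j))
     \<and> (\<chi> i j. poly (A $ i $ j) 0) = mat 1"

text \<open>The tuples N_1..N_r are lists of length r (N_i = N ! (i-1)).\<close>

definition Ncal :: "nat \<Rightarrow> ('a::field^'n^'n) list set" where
  "Ncal r = {N. length N = r \<and> (\<forall>i<r. mpow (N ! i) CHAR('a) = 0)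
              \<and> (\<forall>i<r. \<forall>j<r. (N ! i) ** (N ! j) = (N ! j) ** (N ! i))}"

text \<open>(Z/pZ)^r as lists of length r with entries < p, componentwise addition mod p.\<close>

definition Zp_pow :: "nat \<Rightarrow> nat \<Rightarrow> nat list set" where
  "Zp_pow p r = {a. length a = r \<and> (\<forall>x\<in>set a. x < p)}"

definition Zp_add :: "nat \<Rightarrow> nat list \<Rightarrow> nat list \<Rightarrow> nat list" where
  "Zp_add p a b = map2 (\<lambda>x y. (x + y) mod p) a b"

text \<open>Group homomorphisms (Z/pZ)^r \<rightarrow> GL(n,k), p = CHAR('a) (values outside the domain are ignored).\<close>

definition grp_hom :: "nat \<Rightarrow> (nat list \<Rightarrow> 'a::field^'n^'n) \<Rightarrow> bool" where
  "grp_hom r \<rho> \<longleftrightarrow> (\<forall>a\<in>Zp_pow CHAR('a) r. invertible (\<rho> a))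
     \<and> (\<forall>a\<in>Zp_pow CHAR('a) r. \<forall>b\<in>Zp_pow CHAR('a) r.
           \<rho> (Zp_add CHAR('a) a b) = \<rho> a ** \<rho> b)"

fun mprod_list :: "('b::semiring_1^'n^'n) list \<Rightarrow> 'b^'n^'n" where
  "mprod_list [] = mat 1"
| "mprod_list (M # Ms) = M ** mprod_list Ms"

definition rho_N :: "('a::field^'n^'n) list \<Rightarrow> nat list \<Rightarrow> 'a^'n^'n" where
  "rho_N N a = mprod_list (map2 (\<lambda>M e. mpow (mat 1 + M) e) N a)"

definition Exp :: "'a::field poly^'n^'n \<Rightarrow> 'a poly^'n^'n" where
  "Exp M = (\<Sum>i<CHAR('a). (\<chi> j l. smult (inverse (of_nat (fact i))) (mpow M i $ j $ l)))"

definition Tpow_mat :: "nat \<Rightarrow> 'a::field^'n^'n \<Rightarrow> 'a poly^'n^'n" where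
  "Tpow_mat m N = (\<chi> j l. monom (N $ j $ l) m)"

definition pi_map :: "nat \<Rightarrow> (nat list \<Rightarrow> 'a::field^'n^'n) \<Rightarrow> 'a poly^'n^'n" where
  "pi_map r \<rho> = (if r = 0 then mat 1 else
     (let N = (THE N. N \<in> Ncal r \<and> (\<forall>a\<in>Zp_pow CHAR('a) r. \<rho> a = rho_N N a))
      in mprod_list (map (\<lambda>i. Exp (Tpow_mat (CHAR('a) ^ i) (N ! i))) [0..<r])))"

end

theory Submission
  imports Defs
begin

definition msc :: "'b::semiring_1 \<Rightarrow> 'b^'n^'n \<Rightarrow> 'b^'n^'n" where
  "msc a M = (\<chi> i j. a * M$i$j)"

lemma mpow_0[simp]: "mpow M 0 = mat 1"
  by (simp add: mpow_def)

lemma mpow_Suc: "mpow M (Suc k) = M ** mpow M k"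
  by (simp add: mpow_def)

lemma mpow_add: "mpow M (a + b) = mpow M a ** mpow M b"
  by (induction a) (simp_all add: mpow_Suc matrix_mul_assoc)

lemma mpow_1[simp]: "mpow M (Suc 0) = M"
  by (simp add: mpow_def)

lemma mpow_Suc': "mpow M (Suc k) = mpow M k ** M"
  using mpow_add[of M k 1] by simp

lemma mpow_mult: "mpow M (a * b) = mpow (mpow M a) b"
  by (induction b) (simp_all add: mpow_Suc mpow_add)

lemma comm_mpow: "X ** Y = Y ** X \<Longrightarrow> X ** mpow Y k = mpow Y k ** X"
  by (induction k) (simp_all add: mpow_Suc matrix_mul_assoc, metis matrix_mul_assoc)

lemma comm_mpow2: "X ** Y = Y ** X \<Longrightarrow> mpow X a ** mpow Y b = mpow Y b ** mpow X a"
  by (metis comm_mpow)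

lemma matrix_add_rdistrib': "(B + C) ** A = B ** A + C ** A"
  by (simp add: matrix_matrix_mult_def vec_eq_iff sum.distrib distrib_right)

lemma matrix_sum_right: "A ** (\<Sum>i\<in>S. f i) = (\<Sum>i\<in>S. A ** f i)"
  by (induction S rule: infinite_finite_induct) (simp_all add: matrix_add_ldistrib)

lemma matrix_sum_left: "(\<Sum>i\<in>S. f i) ** A = (\<Sum>i\<in>S. f i ** A)"
  by (induction S rule: infinite_finite_induct) (simp_all add: matrix_add_rdistrib')

lemma msc_mult_left: "msc a M ** N = msc a (M ** N)"
  by (simp add: msc_def matrix_matrix_mult_def vec_eq_iff sum_distrib_left mult.assoc)

lemma msc_mult_right: "(M::'b::comm_semiring_1^'n^'n) ** msc a N = msc a (M ** N)"
  by (simp add: msc_def matrix_matrix_mult_def vec_eq_iff sum_distrib_left mult_ac)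

lemma msc_msc: "msc a (msc b M) = msc (a * b) M"
  by (simp add: msc_def vec_eq_iff mult.assoc)

lemma msc_1[simp]: "msc 1 M = M"
  by (simp add: msc_def vec_eq_iff)

lemma msc_0[simp]: "msc 0 M = 0"
  by (simp add: msc_def vec_eq_iff)

lemma msc_zero[simp]: "msc a 0 = 0"
  by (simp add: msc_def vec_eq_iff)

definition expseq :: "(nat \<Rightarrow> 'a::field^'n^'n) \<Rightarrow> bool" where
 "expseq c \<longleftrightarrow> c 0 = mat 1 \<and> (\<forall>i j. c i ** c j = msc (of_nat ((i+j) choose i)) (c (i+j)))"

lemma expseq_comm: assumes "expseq c" shows "c i ** c j = c j ** c i"
proof -
  have "(i+j) choose i = (j+i) choose j"
    by (metis add.commute add_diff_cancel_left' binomial_symmetric le_add1)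
  then show ?thesis using assms unfolding expseq_def by (simp add: add.commute)
qed

lemma of_nat_char_ne0:
  assumes "0 < m" "m < CHAR('a::field)" shows "(of_nat m :: 'a) \<noteq> 0"
  using assms by (auto simp: of_nat_eq_0_iff_char_dvd dest: dvd_imp_le)

lemma expseq_step:
  assumes c: "expseq (c :: nat \<Rightarrow> 'a::field^'n^'n)" and p: "prime CHAR('a)" and m0: "m0 < CHAR('a)"
  shows "c (m0 + CHAR('a)*m') = msc (inverse (of_nat (fact m0))) (mpow (c 1) m0) ** c (CHAR('a)*m')"
  using m0
proof (induction m0)
  case 0
  then show ?case by simp
next
  case (Suc m0)
  let ?p = "CHAR('a)"
  have ih: "c (m0 + ?p*m') = msc (inverse (of_nat (fact m0))) (mpow (c 1) m0) ** c (?p*m')"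
    using Suc by simp
  have h0: "c 1 ** c (m0 + ?p*m') = msc (of_nat ((1 + (m0 + ?p*m')) choose 1)) (c (1 + (m0 + ?p*m')))"
    using c unfolding expseq_def by blast
  have e: "(of_nat ((1 + (m0 + ?p*m')) choose 1) :: 'a) = of_nat (Suc m0)"
    by (simp only: choose_one of_nat_add of_nat_mult of_nat_CHAR) simp
  have h: "c 1 ** c (m0 + ?p*m') = msc (of_nat (Suc m0)) (c (Suc m0 + ?p*m'))"
    using h0 unfolding e by simp
  have ne: "(of_nat (Suc m0) :: 'a) \<noteq> 0" using Suc.prems of_nat_char_ne0 by blast
  have "msc (inverse (of_nat (Suc m0))) (c 1 ** c (m0 + ?p*m')) = 
     msc (inverse (of_nat (Suc m0)) * of_nat (Suc m0)) (c (Suc m0 + ?p*m'))"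
    unfolding h msc_msc ..
  also have "\<dots> = c (Suc m0 + ?p*m')" using ne by simp
  finally have "c (Suc m0 + ?p*m') = msc (inverse (of_nat (Suc m0))) (c 1 ** c (m0 + ?p*m'))" ..
  also have "\<dots> = msc (inverse (of_nat (Suc m0))) (msc (inverse (of_nat (fact m0))) (c 1 ** mpow (c 1) m0) ** c (?p*m'))"
    by (simp only: ih msc_mult_right msc_mult_left matrix_mul_assoc)
  also have "\<dots> = msc (inverse (of_nat (Suc m0)) * inverse (of_nat (fact m0))) (mpow (c 1) (Suc m0)) ** c (?p*m')"
    by (simp only: msc_mult_left msc_msc mpow_Suc)
  also have "inverse (of_nat (Suc m0)) * inverse (of_nat (fact m0)) = (inverse (of_nat (fact (Suc m0))) :: 'a)"
    by (simp only: fact_Suc of_nat_mult inverse_mult_distrib of_nat_id)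
  finally show ?case .
qed

lemma expseq_nilp:
  assumes c: "expseq (c :: nat \<Rightarrow> 'a::field^'n^'n)" and p: "prime CHAR('a)"
  shows "mpow (c 1) CHAR('a) = 0"
proof -
  let ?p = "CHAR('a)"
  have p1: "?p > 0" using p prime_gt_0_nat by blast
  have s: "c (?p - 1) = msc (inverse (of_nat (fact (?p - 1)))) (mpow (c 1) (?p - 1))"
    using expseq_step[OF c p, of "?p - 1" 0] c p1 by (simp add: expseq_def)
  have "c 1 ** c (?p - 1) = msc (of_nat ((1 + (?p - 1)) choose 1)) (c (1 + (?p - 1)))"
    using c unfolding expseq_def by blast
  also have "\<dots> = 0" using p1 by simp
  finally have z: "msc (inverse (of_nat (fact (?p - 1)))) (mpow (c 1) ?p) = 0"
    using s p1 by (simp add: msc_mult_right mpow_Suc[symmetric])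
  have "(of_nat (fact (?p - 1)) :: 'a) \<noteq> 0"
  proof
    assume "(of_nat (fact (?p - 1)) :: 'a) = 0"
    then have "?p dvd fact (?p - 1)" by (simp add: of_nat_eq_0_iff_char_dvd)
    then show False using p prime_dvd_fact_iff p1 by (metis diff_less not_le zero_less_one)
  qed
  then have "msc (of_nat (fact (?p - 1))) (msc (inverse (of_nat (fact (?p - 1)))) (mpow (c 1) ?p)) = mpow (c 1) ?p"
    by (simp add: msc_msc)
  with z show ?thesis by simp
qed

lemma choose_char:
  assumes p: "prime CHAR('a::comm_ring_1)"
  shows "(of_nat ((CHAR('a)*n) choose (CHAR('a)*k)) :: 'a) = of_nat (n choose k)"
proof (cases "k \<le> n")
  case False
  then have "CHAR('a)*n < CHAR('a)*k" using p prime_gt_0_nat by auto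
  moreover have "n < k" using False by simp
  ultimately show ?thesis by (simp add: binomial_eq_0)
next
  case True
  let ?p = "CHAR('a)"
  have p1: "?p > 0" using p prime_gt_0_nat by blast
  define X :: "'a poly" where "X = [:0,1:]"
  have "(1 + X) ^ ?p = 1 ^ ?p + X ^ ?p"
    by (rule freshmans_dream) (simp_all add: p)
  then have "(1 + X) ^ (?p * n) = (X ^ ?p + 1) ^ n"
    by (simp add: power_mult add.commute)
  also have "\<dots> = (\<Sum>j\<le>n. of_nat (n choose j) * X ^ (?p * j))"
    by (simp add: binomial_ring power_mult)
  also have "\<dots> = (\<Sum>j\<le>n. monom (of_nat (n choose j)) (?p * j))"
    by (simp add: X_def monom_altdef of_nat_mult_conv_smult)
  finally have eq: "(1 + X) ^ (?p * n) = (\<Sum>j\<le>n. monom (of_nat (n choose j)) (?p * j))" .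
  have "coeff ((1 + X) ^ (?p * n)) (?p * k) = of_nat ((?p*n) choose (?p*k))"
    using coeff_linear_poly_power[of "?p*k" "?p*n" 1 1] True
    by (simp add: X_def one_pCons)
  moreover have "coeff (\<Sum>j\<le>n. monom (of_nat (n choose j) :: 'a) (?p * j)) (?p * k) = of_nat (n choose k)"
    using True p1 by (simp add: coeff_sum)
  ultimately show ?thesis using eq by simp
qed

lemma expseq_scale:
  assumes c: "expseq (c :: nat \<Rightarrow> 'a::field^'n^'n)" and p: "prime CHAR('a)"
  shows "expseq (\<lambda>m. c (CHAR('a) * m))"
  unfolding expseq_def
proof (intro conjI allI)
  show "c (CHAR('a) * 0) = mat 1" using c by (simp add: expseq_def)
  fix i j
  have "c (CHAR('a) * i) ** c (CHAR('a) * j) =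
    msc (of_nat ((CHAR('a) * (i+j)) choose (CHAR('a) * i))) (c (CHAR('a) * (i + j)))"
    using c unfolding expseq_def by (simp add: distrib_left)
  then show "c (CHAR('a) * i) ** c (CHAR('a) * j) = msc (of_nat ((i + j) choose i)) (c (CHAR('a) * (i + j)))"
    using choose_char[OF p, of "i+j" i] by simp
qed

lemma expseq_scale_pow:
  assumes c: "expseq (c :: nat \<Rightarrow> 'a::field^'n^'n)" and p: "prime CHAR('a)"
  shows "expseq (\<lambda>m. c (CHAR('a)^i * m))"
proof (induction i)
  case 0
  then show ?case using c by simp
next
  case (Suc i)
  from expseq_scale[OF Suc p] show ?case by (simp add: mult_ac)
qed

lemma Tpow_mat_mult: "Tpow_mat a M ** Tpow_mat b N = Tpow_mat (a+b) (M ** N)"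
  by (simp add: matrix_matrix_mult_def Tpow_mat_def vec_eq_iff mult_monom monom_sum)

lemma Tpow_mat_1: "Tpow_mat 0 (mat 1) = mat 1"
  by (simp add: Tpow_mat_def mat_def vec_eq_iff)

lemma mpow_Tpow: "mpow (Tpow_mat q N) i = Tpow_mat (q*i) (mpow N i)"
  by (induction i) (simp_all add: Tpow_mat_1 mpow_Suc Tpow_mat_mult)

lemma Exp_Tpow: "Exp (Tpow_mat q (N :: 'a::field^'n^'n)) =
  (\<Sum>i<CHAR('a). Tpow_mat (q*i) (msc (inverse (of_nat (fact i))) (mpow N i)))"
  unfolding Exp_def mpow_Tpow
  by (intro sum.cong refl) (simp add: Tpow_mat_def msc_def vec_eq_iff smult_monom)

definition Pm :: "nat \<Rightarrow> nat \<Rightarrow> (nat \<Rightarrow> 'a::field^'n^'n) \<Rightarrow> 'a poly^'n^'n" where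
  "Pm q r c = (\<Sum>m<CHAR('a)^r. Tpow_mat (q*m) (c m))"

lemma digit_bij:
  assumes "p > (0::nat)"
  shows "bij_betw (\<lambda>(i,m'). i + p*m') ({..<p} \<times> {..<p^r}) {..<p^Suc r}"
proof (rule bij_betwI')
  fix x y assume "x \<in> {..<p} \<times> {..<p^r}" "y \<in> {..<p} \<times> {..<p^r}"
  then obtain i m j n where xy: "x = (i,m)" "y = (j,n)" "i < p" "j < p" by auto
  show "((case x of (i, m') \<Rightarrow> i + p * m') = (case y of (i, m') \<Rightarrow> i + p * m')) = (x = y)"
  proof
    assume "(case x of (i, m') \<Rightarrow> i + p * m') = (case y of (i, m') \<Rightarrow> i + p * m')"
    then have e: "i + p*m = j + p*n" using xy by simp
    then have "(i + p*m) mod p = (j + p*n) mod p" by simp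
    then have "i = j" using xy by simp
    with e assms have "m = n" by simp
    with \<open>i = j\<close> xy show "x = y" by simp
  qed simp
next
  fix x assume "x \<in> {..<p} \<times> {..<p^r}"
  then obtain i m where x: "x = (i,m)" "i < p" "m < p^r" by auto
  have "i + p*m < p + p*m" using x by simp
  also have "\<dots> = p * (m+1)" by simp
  also have "\<dots> \<le> p * p^r" using x by (intro mult_le_mono2) simp
  finally show "(case x of (i, m') \<Rightarrow> i + p * m') \<in> {..<p^Suc r}" using x by simp
next
  fix y assume y: "y \<in> {..<p^Suc r}"
  have "y div p < p^r" using y assms by (simp add: div_less_iff_less_mult mult.commute)
  then have "(y mod p, y div p) \<in> {..<p} \<times> {..<p^r}" using assms by simp
  moreover have "y = (case (y mod p, y div p) of (i, m') \<Rightarrow> i + p * m')" by simp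
  ultimately show "\<exists>x\<in>{..<p} \<times> {..<p^r}. y = (case x of (i, m') \<Rightarrow> i + p * m')" by blast
qed

lemma Pm_step:
  assumes c: "expseq (c :: nat \<Rightarrow> 'a::field^'n^'n)" and p: "prime CHAR('a)"
  shows "Pm q (Suc r) c = Exp (Tpow_mat q (c 1)) ** Pm (q*CHAR('a)) r (\<lambda>m. c (CHAR('a)*m))"
proof -
  let ?p = "CHAR('a)"
  have p1: "?p > 0" using p prime_gt_0_nat by blast
  let ?g = "\<lambda>m. Tpow_mat (q*m) (c m)"
  have "Exp (Tpow_mat q (c 1)) ** Pm (q*?p) r (\<lambda>m. c (?p*m)) =
    (\<Sum>i<?p. \<Sum>m'<?p^r. Tpow_mat (q*i) (msc (inverse (of_nat (fact i))) (mpow (c 1) i)) ** Tpow_mat (q*?p*m') (c (?p*m')))"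
    unfolding Exp_Tpow Pm_def matrix_sum_left matrix_sum_right by (rule sum.swap)
  also have "\<dots> = (\<Sum>i<?p. \<Sum>m'<?p^r. ?g (i + ?p*m'))"
  proof (intro sum.cong refl)
    fix i m' assume "i \<in> {..<?p}"
    then have "i < ?p" by simp
    then show "Tpow_mat (q*i) (msc (inverse (of_nat (fact i))) (mpow (c 1) i)) ** Tpow_mat (q*?p*m') (c (?p*m')) = ?g (i + ?p*m')"
      by (simp add: Tpow_mat_mult expseq_step[OF c p] distrib_left mult.assoc)
  qed
  also have "\<dots> = (\<Sum>(i,m')\<in>{..<?p} \<times> {..<?p^r}. ?g (i + ?p*m'))"
    by (rule sum.cartesian_product)
  also have "\<dots> = (\<Sum>m<?p^Suc r. ?g m)"
    using sum.reindex_bij_betw[OF digit_bij[OF p1, of r], of ?g]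
    by (simp add: case_prod_beta')
  finally show ?thesis unfolding Pm_def by simp
qed

lemma Pm_prod:
  assumes c: "expseq (c :: nat \<Rightarrow> 'a::field^'n^'n)" and p: "prime CHAR('a)"
  shows "Pm q r c = mprod_list (map (\<lambda>i. Exp (Tpow_mat (q*CHAR('a)^i) (c (CHAR('a)^i)))) [0..<r])"
  using c
proof (induction r arbitrary: q c)
  case 0
  then show ?case by (simp add: Pm_def expseq_def Tpow_mat_1)
next
  case (Suc r)
  have c': "expseq (\<lambda>m. c (CHAR('a)*m))" using expseq_scale[OF Suc.prems p] .
  have l: "[0..<Suc r] = 0 # map Suc [0..<r]"
    by (simp add: upt_conv_Cons map_Suc_upt del: upt_Suc)
  show ?case
    unfolding Pm_step[OF Suc.prems p] Suc.IH[OF c'] l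
    by (simp add: o_def mult_ac)
qed

lemma Ycoeff:
  fixes F :: "'a::comm_ring_1 poly poly"
  shows "coeff (coeff (([:[:0,1:]:] + [:0,1:]) * F) b) a =
    (if a = 0 then 0 else coeff (coeff F b) (a-1)) + (if b = 0 then 0 else coeff (coeff F (b-1)) a)"
  by (cases a; cases b) (simp_all add: algebra_simps coeff_pCons)

lemma coeff_in_TT':
  fixes f :: "'a::comm_ring_1 poly"
  shows "coeff (coeff (in_TT' f) b) a = of_nat ((a+b) choose a) * coeff f (a+b)"
proof (induction f arbitrary: a b rule: pCons_induct)
  case 0
  then show ?case by (simp add: in_TT'_def)
next
  case (pCons x f)
  have e: "in_TT' (pCons x f) = [:[:x:]:] + ([:[:0,1:]:] + [:0,1:]) * in_TT' f"
    by (simp add: in_TT'_def map_poly_pCons)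
  show ?case
  proof (cases a)
    case 0
    then show ?thesis
      by (cases b) (simp_all add: e Ycoeff pCons.IH coeff_pCons)
  next
    case (Suc a')
    then show ?thesis
    proof (cases b)
      case 0
      then show ?thesis using Suc by (simp add: e Ycoeff pCons.IH coeff_pCons)
    next
      case (Suc b')
      have "coeff (coeff (in_TT' (pCons x f)) b) a =
        of_nat ((a'+b) choose a') * coeff f (a'+b) + of_nat ((a+b') choose a) * coeff f (a+b')"
        using Suc \<open>a = Suc a'\<close> by (simp add: e Ycoeff pCons.IH coeff_pCons)
      also have "\<dots> = of_nat ((a+b) choose a) * coeff (pCons x f) (a+b)"
        using Suc \<open>a = Suc a'\<close> by (simp add: coeff_pCons algebra_simps)
      finally show ?thesis .
    qed
  qed
qed

definition cseq :: "'a::field poly^'n^'n \<Rightarrow> nat \<Rightarrow> 'a^'n^'n" where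
  "cseq A m = (\<chi> j l. coeff (A$j$l) m)"

lemma exp_matrix_expseq:
  assumes "exp_matrix (A :: 'a::field poly^'n^'n)"
  shows "expseq (cseq A)"
  unfolding expseq_def
proof (intro conjI allI)
  have "(\<chi> i j. poly (A $ i $ j) 0) = mat 1" using assms by (simp add: exp_matrix_def)
  then show "cseq A 0 = mat 1" by (simp add: cseq_def poly_0_coeff_0)
  fix a b
  have E: "(\<chi> i j. in_T (A $ i $ j)) ** (\<chi> i j. in_T' (A $ i $ j)) = (\<chi> i j. in_TT' (A $ i $ j))"
    using assms by (simp add: exp_matrix_def)
  show "cseq A a ** cseq A b = msc (of_nat ((a + b) choose a)) (cseq A (a + b))"
  proof (simp add: vec_eq_iff, intro allI)
    fix j l
    have "(cseq A a ** cseq A b) $ j $ l = coeff (coeff (((\<chi> i j. in_T (A $ i $ j)) ** (\<chi> i j. in_T' (A $ i $ j))) $ j $ l) b) a"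
      by (simp add: matrix_matrix_mult_def cseq_def coeff_sum in_T_def in_T'_def coeff_map_poly mult.commute)
    also have "\<dots> = coeff (coeff (in_TT' (A$j$l)) b) a" by (simp add: E)
    also have "\<dots> = msc (of_nat ((a + b) choose a)) (cseq A (a + b)) $ j $ l"
      by (simp add: coeff_in_TT' msc_def cseq_def)
    finally show "(cseq A a ** cseq A b) $ j $ l = msc (of_nat ((a + b) choose a)) (cseq A (a + b)) $ j $ l" .
  qed
qed

lemma A_eq_Pm:
  fixes A :: "'a::field poly^'n^'n"
  assumes "\<And>j l. degree (A$j$l) < CHAR('a)^r"
  shows "Pm 1 r (cseq A) = A"
proof -
  fix j0 l0
  have pos: "0 < CHAR('a)^r" using assms[of j0 l0] by linarith
  obtain N where N: "CHAR('a)^r = Suc N" using pos by (cases "CHAR('a)^r") auto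
  have s: "{..<CHAR('a)^r} = {..N}" by (simp add: N lessThan_Suc_atMost)
  have "Pm 1 r (cseq A) $ j $ l = A $ j $ l" for j l
  proof -
    have "Pm 1 r (cseq A) $ j $ l = (\<Sum>m\<le>N. monom (coeff (A $ j $ l) m) m)"
      unfolding Pm_def s by (simp add: Tpow_mat_def cseq_def)
    also have "\<dots> = A $ j $ l"
      by (rule poly_as_sum_of_monoms') (use assms[of j l] N in linarith)
    finally show ?thesis .
  qed
  then show ?thesis by (simp add: vec_eq_iff)
qed

lemma msc_add: "msc (a + b) M = msc a M + msc b M"
  by (simp add: msc_def vec_eq_iff distrib_right)

lemma mpow_binom:
  fixes N :: "'a::comm_ring_1^'n^'n"
  shows "mpow (mat 1 + N) m = (\<Sum>k\<le>m. msc (of_nat (m choose k)) (mpow N k))"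
proof (induction m)
  case 0
  then show ?case by simp
next
  case (Suc m)
  define S where "S = (\<Sum>k\<le>m. msc (of_nat (m choose k)) (mpow N k))"
  define T where "T = (\<Sum>k\<le>m. msc (of_nat (m choose Suc k)) (mpow N (Suc k)))"
  have ST: "S = mat 1 + T"
  proof -
    have "S = (\<Sum>k\<le>Suc m. msc (of_nat (m choose k)) (mpow N k))"
      unfolding S_def by (simp add: sum.atMost_Suc binomial_eq_0)
    also have "\<dots> = mat 1 + T"
      unfolding T_def by (subst sum.atMost_Suc_shift) simp
    finally show ?thesis .
  qed
  have NS: "N ** S = (\<Sum>k\<le>m. msc (of_nat (m choose k)) (mpow N (Suc k)))"
    unfolding S_def matrix_sum_right msc_mult_right mpow_Suc ..
  have "(\<Sum>k\<le>Suc m. msc (of_nat (Suc m choose k)) (mpow N k)) =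
     mat 1 + (\<Sum>k\<le>m. msc (of_nat (Suc m choose Suc k)) (mpow N (Suc k)))"
    by (subst sum.atMost_Suc_shift) simp
  also have "\<dots> = mat 1 + (N ** S + T)"
    unfolding NS T_def by (simp add: msc_add sum.distrib)
  also have "\<dots> = (mat 1 + N) ** S"
    by (simp add: matrix_add_rdistrib' ST add_ac)
  finally show ?case unfolding mpow_Suc Suc.IH S_def[symmetric] by simp
qed

lemma mpow_frob:
  fixes N :: "'a::field^'n^'n"
  assumes p: "prime CHAR('a)" and N: "mpow N CHAR('a) = 0"
  shows "mpow (mat 1 + N) CHAR('a) = mat 1"
proof -
  let ?p = "CHAR('a)"
  have "mpow (mat 1 + N) ?p = (\<Sum>k\<in>{0}. msc (of_nat (?p choose k)) (mpow N k))"
    unfolding mpow_binom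
  proof (rule sum.mono_neutral_right)
    show "\<forall>k\<in>{..?p} - {0}. msc (of_nat (?p choose k)) (mpow N k) = 0"
    proof
      fix k assume k: "k \<in> {..?p} - {0}"
      show "msc (of_nat (?p choose k)) (mpow N k) = 0"
      proof (cases "k = ?p")
        case True then show ?thesis using N by simp
      next
        case False
        then have "?p dvd (?p choose k)"
          using k p by (intro dvd_choose_prime) auto
        then have "(of_nat (?p choose k) :: 'a) = 0" by (simp add: of_nat_eq_0_iff_char_dvd)
        then show ?thesis by simp
      qed
    qed
  qed auto
  then show ?thesis by simp
qed

lemma comm_plus1: "X ** Y = Y ** X \<Longrightarrow> (mat 1 + X) ** (mat 1 + Y) = (mat 1 + Y) ** (mat 1 + X)"
  by (simp add: matrix_add_ldistrib matrix_add_rdistrib' add_ac)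

lemma rho_N_Cons: "rho_N (M # Ns) (x # xs) = mpow (mat 1 + M) x ** rho_N Ns xs"
  by (simp add: rho_N_def)

lemma rho_N_Nil: "rho_N [] xs = mat 1"
  by (simp add: rho_N_def)

lemma rho_comm:
  "(\<forall>M'\<in>set Ns. X ** (mat 1 + M') = (mat 1 + M') ** X) \<Longrightarrow> X ** rho_N Ns a = rho_N Ns a ** X"
proof (induction Ns arbitrary: a)
  case Nil
  then show ?case by (simp add: rho_N_Nil)
next
  case (Cons M Ns)
  show ?case
  proof (cases a)
    case Nil
    then show ?thesis by (simp add: rho_N_def)
  next
    case (Cons x xs)
    have h1: "X ** mpow (mat 1 + M) x = mpow (mat 1 + M) x ** X"
      using Cons.prems by (intro comm_mpow) simp
    have h2: "X ** rho_N Ns xs = rho_N Ns xs ** X" using Cons.prems Cons.IH by simp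
    have "X ** (mpow (mat 1 + M) x ** rho_N Ns xs) = (X ** mpow (mat 1 + M) x) ** rho_N Ns xs"
      by (simp only: matrix_mul_assoc)
    also have "\<dots> = mpow (mat 1 + M) x ** (X ** rho_N Ns xs)"
      by (simp only: h1 matrix_mul_assoc)
    also have "\<dots> = (mpow (mat 1 + M) x ** rho_N Ns xs) ** X"
      by (simp only: h2 matrix_mul_assoc)
    finally show ?thesis unfolding Cons rho_N_Cons .
  qed
qed

lemma mpow_mat1: "mpow (mat 1) k = mat 1"
  by (induction k) (simp_all add: mpow_Suc)

lemma mpow_mod:
  assumes "mpow U p = mat 1" shows "mpow U (n mod p) = mpow U n"
proof -
  have "mpow U n = mpow U (n mod p + p * (n div p))" by simp
  also have "\<dots> = mpow U (n mod p)" unfolding mpow_add mpow_mult assms mpow_mat1 by simp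
  finally show ?thesis by simp
qed

lemma rho_hom:
  assumes "length a = length N" "length b = length N"
    "\<forall>M\<in>set N. mpow (mat 1 + M) p = mat 1"
    "\<forall>M\<in>set N. \<forall>M'\<in>set N. M ** M' = M' ** M"
  shows "rho_N N (Zp_add p a b) = rho_N N a ** rho_N N b"
  using assms
proof (induction N arbitrary: a b)
  case Nil
  then show ?case by (simp add: rho_N_Nil)
next
  case (Cons M Ns)
  obtain x xs where a: "a = x # xs" using Cons.prems(1) by (cases a) auto
  obtain y ys where b: "b = y # ys" using Cons.prems(2) by (cases b) auto
  let ?U = "mat 1 + M"
  have ih: "rho_N Ns (Zp_add p xs ys) = rho_N Ns xs ** rho_N Ns ys"
    using Cons.prems unfolding a b by (intro Cons.IH) simp_all
  have U: "mpow ?U p = mat 1" using Cons.prems(3) by simp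
  have m: "mpow ?U ((x + y) mod p) = mpow ?U x ** mpow ?U y"
    by (simp only: mpow_mod[OF U] mpow_add)
  have cm: "mpow ?U y ** rho_N Ns xs = rho_N Ns xs ** mpow ?U y"
  proof (rule rho_comm, rule ballI)
    fix M' assume "M' \<in> set Ns"
    then have m1: "M' \<in> set (M # Ns)" by simp
    have m2: "M \<in> set (M # Ns)" by simp
    have "M' ** M = M ** M'"
      using Cons.prems(4) m1 m2 by blast
    then have "(mat 1 + M') ** ?U = ?U ** (mat 1 + M')"
      by (rule comm_plus1)
    then show "mpow ?U y ** (mat 1 + M') = (mat 1 + M') ** mpow ?U y"
      by (rule comm_mpow[THEN sym])
  qed
  have z: "Zp_add p a b = ((x + y) mod p) # Zp_add p xs ys"
    unfolding a b by (simp add: Zp_add_def)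
  have "mpow ?U x ** mpow ?U y ** (rho_N Ns xs ** rho_N Ns ys) =
     mpow ?U x ** (mpow ?U y ** rho_N Ns xs) ** rho_N Ns ys"
    by (simp only: matrix_mul_assoc)
  also have "\<dots> = (mpow ?U x ** rho_N Ns xs) ** (mpow ?U y ** rho_N Ns ys)"
    by (simp only: cm matrix_mul_assoc)
  finally show ?case unfolding z rho_N_Cons ih m unfolding a b rho_N_Cons .
qed

lemma invertible_mat1: "invertible (mat 1 :: 'a::field^'n^'n)"
  unfolding invertible_right_inverse by (rule exI[of _ "mat 1"]) simp

lemma invertible_mpow:
  fixes U :: "'a::field^'n^'n"
  assumes "invertible U" shows "invertible (mpow U k)"
  by (induction k) (simp_all add: mpow_Suc invertible_mat1 invertible_mult assms)

lemma rho_inv: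
  fixes N :: "('a::field^'n^'n) list"
  assumes "\<forall>M\<in>set N. mpow (mat 1 + M) p = mat 1" "p > 0"
  shows "invertible (rho_N N a)"
  using assms
proof (induction N arbitrary: a)
  case Nil
  then show ?case by (simp add: rho_N_Nil invertible_mat1)
next
  case (Cons M Ns)
  show ?case
  proof (cases a)
    case Nil
    then show ?thesis by (simp add: rho_N_def invertible_mat1)
  next
    case (Cons x xs)
    have "(mat 1 + M) ** mpow (mat 1 + M) (p - 1) = mpow (mat 1 + M) (Suc (p - 1))"
      by (simp only: mpow_Suc)
    also have "Suc (p - 1) = p" using \<open>p > 0\<close> by simp
    also have "mpow (mat 1 + M) p = mat 1" using Cons.prems by simp
    finally have "(mat 1 + M) ** mpow (mat 1 + M) (p - 1) = mat 1" .
    then have "invertible (mat 1 + M)" using invertible_right_inverse by blast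
    then show ?thesis unfolding Cons rho_N_Cons
      using Cons.IH Cons.prems by (intro invertible_mult invertible_mpow) auto
  qed
qed

lemma rho_zero: "length xs = length N \<Longrightarrow> (\<forall>x\<in>set xs. x = 0) \<Longrightarrow> rho_N N xs = mat 1"
proof (induction N arbitrary: xs)
  case Nil
  then show ?case by (simp add: rho_N_Nil)
next
  case (Cons M Ns)
  then obtain y ys where "xs = y # ys" by (cases xs) auto
  with Cons show ?case by (simp add: rho_N_Cons)
qed

lemma rho_unit:
  "i < length N \<Longrightarrow> rho_N N ((replicate (length N) 0)[i := 1]) = mat 1 + N ! i"
proof (induction N arbitrary: i)
  case Nil
  then show ?case by simp
next
  case (Cons M Ns)
  show ?case
  proof (cases i)
    case 0
    then show ?thesis by (simp add: rho_N_Cons rho_zero)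
  next
    case (Suc i')
    then show ?thesis using Cons by (simp add: rho_N_Cons)
  qed
qed

theorem lemma2p2:
  fixes A :: "'a::alg_closed_field poly^'n^'n"
  assumes "prime CHAR('a)"
    and "exp_matrix A"
  shows "\<exists>r \<rho>. grp_hom r (\<rho> :: nat list \<Rightarrow> 'a^'n^'n) \<and> pi_map r \<rho> = A"
proof -
  note p = assms(1)
  let ?p = "CHAR('a)"
  define c where "c = cseq A"
  have c: "expseq c" using exp_matrix_expseq[OF assms(2)] c_def by simp
  have p2: "2 \<le> ?p" using p prime_ge_2_nat by blast
  define D where "D = (\<Sum>j\<in>UNIV. \<Sum>l\<in>UNIV. degree (A$j$l))"
  define r where "r = Suc D"
  have r0: "r \<noteq> 0" by (simp add: r_def)
  have deg: "degree (A$j$l) < ?p^r" for j l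
  proof -
    have "degree (A$j$l) \<le> (\<Sum>l\<in>UNIV. degree (A$j$l))" by (rule member_le_sum) auto
    also have "\<dots> \<le> D" unfolding D_def
      by (rule member_le_sum[of j UNIV "\<lambda>j. \<Sum>l\<in>UNIV. degree (A$j$l)"]) auto
    also have "D < 2^r" unfolding r_def using less_exp[of "Suc D"] by simp
    also have "2^r \<le> ?p^r" using p2 by (rule power_mono) simp
    finally show ?thesis .
  qed
  have AP: "Pm 1 r c = A" unfolding c_def by (rule A_eq_Pm[OF deg])
  define N where "N = map (\<lambda>i. c (?p^i)) [0..<r]"
  have lenN: "length N = r" by (simp add: N_def)
  have Ni: "N ! i = c (?p^i)" if "i < r" for i using that by (simp add: N_def)
  have setN: "set N = (\<lambda>i. c (?p^i)) ` {0..<r}" by (simp add: N_def)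
  have nil: "mpow M ?p = 0" if "M \<in> set N" for M
  proof -
    from that obtain i where "M = c (?p^i)" using setN by auto
    moreover have "mpow ((\<lambda>m. c (?p^i * m)) 1) ?p = 0"
      by (rule expseq_nilp[OF expseq_scale_pow[OF c p] p])
    ultimately show ?thesis by simp
  qed
  have comm: "M ** M' = M' ** M" if "M \<in> set N" "M' \<in> set N" for M M'
  proof -
    from that obtain i j where "M = c (?p^i)" "M' = c (?p^j)" using setN by auto
    then show ?thesis using expseq_comm[OF c, of "?p^i" "?p^j"] by simp
  qed
  have U: "\<forall>M\<in>set N. mpow (mat 1 + M) ?p = mat 1" using mpow_frob[OF p] nil by blast
  have commN: "\<forall>M\<in>set N. \<forall>M'\<in>set N. M ** M' = M' ** M" using comm by blast
  have NN: "N \<in> Ncal r"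
    unfolding Ncal_def
  proof (intro CollectI conjI allI impI)
    show "length N = r" by (rule lenN)
    fix i assume "i < r"
    then show "mpow (N ! i) ?p = 0" using nil lenN by simp
  next
    fix i j assume "i < r" "j < r"
    then show "N ! i ** N ! j = N ! j ** N ! i" using comm lenN by simp
  qed
  define \<rho> where "\<rho> = rho_N N"
  have hom: "grp_hom r \<rho>"
    unfolding grp_hom_def \<rho>_def
  proof (intro conjI ballI)
    fix a assume "a \<in> Zp_pow ?p r"
    show "invertible (rho_N N a)" using rho_inv[OF U] p2 by simp
  next
    fix a b assume a: "a \<in> Zp_pow ?p r" and b: "b \<in> Zp_pow ?p r"
    show "rho_N N (Zp_add ?p a b) = rho_N N a ** rho_N N b"
      by (rule rho_hom) (use a b lenN U commN in \<open>auto simp: Zp_pow_def\<close>)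
  qed
  have theN: "(THE N'. N' \<in> Ncal r \<and> (\<forall>a\<in>Zp_pow ?p r. \<rho> a = rho_N N' a)) = N"
  proof (rule the_equality)
    show "N \<in> Ncal r \<and> (\<forall>a\<in>Zp_pow ?p r. \<rho> a = rho_N N a)" using NN \<rho>_def by simp
  next
    fix N' assume H: "N' \<in> Ncal r \<and> (\<forall>a\<in>Zp_pow ?p r. \<rho> a = rho_N N' a)"
    have lenN': "length N' = r" using H by (simp add: Ncal_def)
    show "N' = N"
    proof (rule nth_equalityI)
      show "length N' = length N" using lenN lenN' by simp
      fix i assume i: "i < length N'"
      define e where "e = (replicate r 0)[i := (1::nat)]"
      have "set e \<subseteq> insert 1 (set (replicate r (0::nat)))"
        unfolding e_def by (rule set_update_subset_insert)
      then have eZ: "e \<in> Zp_pow ?p r"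
        unfolding Zp_pow_def using p2 by (auto simp: e_def)
      have "mat 1 + N' ! i = rho_N N' e" using rho_unit[of i N'] i lenN' e_def by simp
      also have "\<dots> = \<rho> e" using H eZ by simp
      also have "\<dots> = mat 1 + N ! i" unfolding \<rho>_def e_def using rho_unit[of i N] i lenN lenN' by simp
      finally show "N' ! i = N ! i" by simp
    qed
  qed
  have "pi_map r \<rho> = mprod_list (map (\<lambda>i. Exp (Tpow_mat (?p^i) (N ! i))) [0..<r])"
    unfolding pi_map_def theN using r0 by (simp add: Let_def)
  also have "\<dots> = mprod_list (map (\<lambda>i. Exp (Tpow_mat (1*?p^i) (c (?p^i)))) [0..<r])"
    by (intro arg_cong[where f=mprod_list] map_cong) (auto simp: Ni)
  also have "\<dots> = Pm 1 r c" by (rule Pm_prod[OF c p, symmetric])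
  also have "\<dots> = A" by (rule AP)
  finally show ?thesis using hom by blast
qed

end
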